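(* Let $k\ge1$, $\alpha\ge0$, and let $X$ be a homogeneous Poisson point process in $\mathbb R^d$ of intensity $1$ with distribution $\mathbb P$. For $\varphi\in\mathbf N_o$ let $\mathfrak R_k(\varphi)=\inf\{r>0:\varphi(B_r)\ge k+1\}$ and $$\xi_{k,\alpha}(\varphi)=\frac12\sum_{x\in\varphi:\ |x|\le\mathfrak R_k(\varphi)\vee\mathfrak R_k(\varphi-x)}|x|^\alpha.$$ Then $\xi_{k,\alpha}$ is weakly decreasing, i.e., there exists $k'\ge1$ such that $$\mathbb P\big(\#\{y\in X:\ \xi_{k,\alpha}(X\cup\{o\}-y)>\xi_{k,\alpha}(X-y)\}\le k'\big)=1.$$
   Context: $\mathbf N_o$ denotes the locally finite point configurations in $\mathbb R^d$ containing the origin $o$; $\varphi(A)$ is the number of points of $\varphi$ in $A$; $B_r$ is the closed ball of radius $r$ around $o$; $\varphi-x$ denotes the configuration shifted by $-x$. $\xi_{k,\alpha}$ is the score function of the sum of $\alpha$-power-weighted edge lengths at the origin in the undirected $k$-nearest neighbor graph. *)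

theory Defs
  imports "HOL-Probability.Probability"
begin

text \<open>Point configurations are sets of points of a Euclidean space.
  phi(B_r) is the cardinality of phi intersected with the closed ball cball 0 r.\<close>

definition shift_conf :: "'a::euclidean_space set \<Rightarrow> 'a \<Rightarrow> 'a set" where
  "shift_conf \<phi> x = (\<lambda>z. z - x) ` \<phi>"

definition locally_finite_conf :: "'a::euclidean_space set \<Rightarrow> bool" where
  "locally_finite_conf \<phi> \<longleftrightarrow> (\<forall>B. bounded B \<longrightarrow> finite (\<phi> \<inter> B))"

definition knn_radius :: "nat \<Rightarrow> 'a::euclidean_space set \<Rightarrow> real" where
  "knn_radius k \<phi> = Inf {r. r > 0 \<and> card (\<phi> \<inter> cball 0 r) \<ge> k + 1}"

text \<open>Score function of the sum of alpha-power-weighted edge lengths at the origin in the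
  undirected k-nearest neighbour graph.\<close>
definition xi_knn :: "nat \<Rightarrow> real \<Rightarrow> 'a::euclidean_space set \<Rightarrow> real" where
  "xi_knn k \<alpha> \<phi> = (1/2) * (\<Sum>x\<in>{x\<in>\<phi>. norm x \<le> max (knn_radius k \<phi>) (knn_radius k (shift_conf \<phi> x))}.
                                norm x powr \<alpha>)"

definition hom_poisson_pp :: "'m measure \<Rightarrow> ('m \<Rightarrow> 'a::euclidean_space set) \<Rightarrow> bool" where
  "hom_poisson_pp M X \<longleftrightarrow>
     prob_space M \<and>
     (\<forall>\<omega>\<in>space M. locally_finite_conf (X \<omega>)) \<and>
     (\<forall>B. B \<in> sets lborel \<and> bounded B \<longrightarrow>
        (\<lambda>\<omega>. card (X \<omega> \<inter> B)) \<in> measurable M (count_space UNIV) \<and>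
        (\<forall>n. measure M {\<omega>\<in>space M. card (X \<omega> \<inter> B) = n}
               = exp (- measure lborel B) * measure lborel B ^ n / fact n)) \<and>
     (\<forall>(I::nat set) (B::nat \<Rightarrow> 'a set). finite I \<and> disjoint_family_on B I \<and>
        (\<forall>i\<in>I. B i \<in> sets lborel \<and> bounded (B i)) \<longrightarrow>
        prob_space.indep_vars M (\<lambda>_. count_space UNIV) (\<lambda>i \<omega>. card (X \<omega> \<inter> B i)) I)"

end

theory Submission
  imports Defs
begin


lemma cone_geom:
  fixes y z c :: "'a::euclidean_space"
  assumes "y \<noteq> 0" "z \<noteq> 0" "norm z \<le> norm y" "z \<noteq> y"
    "dist (y /\<^sub>R norm y) c < 1/2" "dist (z /\<^sub>R norm z) c < 1/2"
  shows "norm (z - y) < norm y"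
proof -
  define u where "u = y /\<^sub>R norm y"
  define v where "v = z /\<^sub>R norm z"
  define a where "a = norm y"
  define b where "b = norm z"
  have a: "a > 0" "b > 0" "b \<le> a" using assms by (auto simp: a_def b_def)
  have yu: "y = a *\<^sub>R u" "z = b *\<^sub>R v" using assms by (auto simp: u_def v_def a_def b_def)
  have nu: "norm u = 1" "norm v = 1" using assms by (auto simp: u_def v_def)
  have "dist u v < 1" using assms(5,6) dist_triangle_half_l[of u c 1 v] unfolding u_def v_def
    by (simp add: dist_commute)
  hence "norm (u - v)^2 < 1" by (simp add: dist_norm power_less_one_iff)
  hence "u \<bullet> u - 2 * (u \<bullet> v) + v \<bullet> v < 1"
    by (simp add: power2_norm_eq_inner inner_diff_left inner_diff_right inner_commute)
  hence uv: "u \<bullet> v > 1/2" using nu by (simp add: norm_eq_1)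
  have uu: "u \<bullet> u = 1" "v \<bullet> v = 1" using nu by (simp_all add: norm_eq_1)
  have "norm (z - y)^2 = (z - y) \<bullet> (z - y)" by (simp add: power2_norm_eq_inner)
  also have "\<dots> = b^2 + a^2 - 2*a*b*(u \<bullet> v)"
    unfolding yu by (simp add: inner_diff_left inner_diff_right inner_commute uu power2_eq_square algebra_simps)
  also have "\<dots> < a^2"
  proof -
    have "a * 1 < a * (2*(u \<bullet> v))" using uv a by (intro mult_strict_left_mono) auto
    hence "b < a * (2 * (u \<bullet> v))" using a by linarith
    hence "b * b < b * (2 * (a * (u \<bullet> v)))" using a by simp
    thus ?thesis by (simp add: power2_eq_square algebra_simps)
  qed
  finally show ?thesis using a by (simp add: a_def power_less_imp_less_base)
qed


lemma lf_shift: "locally_finite_conf P \<Longrightarrow> locally_finite_conf (shift_conf P x)"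
  unfolding locally_finite_conf_def shift_conf_def
proof (intro allI impI)
  fix B :: "'a set" assume H: "\<forall>B. bounded B \<longrightarrow> finite (P \<inter> B)" and b: "bounded B"
  have "bounded ((\<lambda>z. z + x) ` B)" using bounded_translation[OF b, of x] by (simp add: add.commute)
  hence "finite (P \<inter> (\<lambda>z. z + x) ` B)" using H by blast
  moreover have "(\<lambda>z. z - x) ` P \<inter> B \<subseteq> (\<lambda>z. z - x) ` (P \<inter> (\<lambda>z. z + x) ` B)"
  proof
    fix w assume "w \<in> (\<lambda>z. z - x) ` P \<inter> B"
    then obtain z where "z \<in> P" "w = z - x" "w \<in> B" by blast
    thus "w \<in> (\<lambda>z. z - x) ` (P \<inter> (\<lambda>z. z + x) ` B)" 
    proof -
      have "z \<in> (\<lambda>z. z + x) ` B" using \<open>w \<in> B\<close> \<open>w = z - x\<close> by (intro image_eqI[of z _ "z - x"]) auto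
      thus ?thesis using \<open>z \<in> P\<close> \<open>w = z - x\<close> by blast
    qed
  qed
  ultimately show "finite ((\<lambda>z. z - x) ` P \<inter> B)" using finite_subset by blast
qed

lemma lf_insert: "locally_finite_conf P \<Longrightarrow> locally_finite_conf (insert a P)"
  unfolding locally_finite_conf_def
proof (intro allI impI)
  fix B :: "'a set" assume "\<forall>B. bounded B \<longrightarrow> finite (P \<inter> B)" "bounded B"
  hence "finite (P \<inter> B)" by blast
  moreover have "insert a P \<inter> B \<subseteq> insert a (P \<inter> B)" by blast
  ultimately show "finite (insert a P \<inter> B)" using finite_subset by blast
qed

lemma lf_cball: "locally_finite_conf P \<Longrightarrow> finite (P \<inter> cball c r)"
  unfolding locally_finite_conf_def by simp

lemma shift_shift: "shift_conf (shift_conf P a) b = shift_conf P (a + b)"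
  unfolding shift_conf_def by (auto simp: image_image algebra_simps)

lemma shift_0: "shift_conf P 0 = P"
  unfolding shift_conf_def by simp

lemma shift_insert: "shift_conf (insert a P) b = insert (a - b) (shift_conf P b)"
  unfolding shift_conf_def by simp

lemma knn_le:
  assumes lf: "locally_finite_conf P" and r: "0 < r" and F: "finite F" "F \<subseteq> P \<inter> cball 0 r" "card F \<ge> k + 1"
  shows "knn_radius k P \<le> r"
  unfolding knn_radius_def
proof (rule cInf_lower)
  have "card F \<le> card (P \<inter> cball 0 r)" using F lf_cball[OF lf] by (intro card_mono) auto
  thus "r \<in> {r. r > 0 \<and> card (P \<inter> cball 0 r) \<ge> k + 1}" using r F by auto
  show "bdd_below {r. r > 0 \<and> card (P \<inter> cball 0 r) \<ge> k + 1}" by (rule bdd_belowI[of _ 0]) auto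
qed

lemma knn_mono:
  assumes lf: "locally_finite_conf Q" and PQ: "P \<subseteq> Q"
    and ne: "{r. r > 0 \<and> card (P \<inter> cball 0 r) \<ge> k + 1} \<noteq> {}"
  shows "knn_radius k Q \<le> knn_radius k P"
  unfolding knn_radius_def
proof (rule cInf_superset_mono[OF ne])
  show "bdd_below {r. r > 0 \<and> card (Q \<inter> cball 0 r) \<ge> k + 1}" by (rule bdd_belowI[of _ 0]) auto
  show "{r. r > 0 \<and> card (P \<inter> cball 0 r) \<ge> k + 1} \<subseteq> {r. r > 0 \<and> card (Q \<inter> cball 0 r) \<ge> k + 1}"
  proof safe
    fix r assume "0 < r" "k + 1 \<le> card (P \<inter> cball 0 r)"
    moreover have "card (P \<inter> cball 0 r) \<le> card (Q \<inter> cball 0 r)"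
      using PQ lf_cball[OF lf] by (intro card_mono) auto
    ultimately show "k + 1 \<le> card (Q \<inter> cball 0 r)" by simp
  qed
qed

lemma finite_card_bound:
  assumes "\<And>F. F \<subseteq> A \<Longrightarrow> finite F \<Longrightarrow> card F = k + 1 \<Longrightarrow> False"
  shows "finite A \<and> card A \<le> k"
proof -
  have fin: "finite A"
  proof (rule ccontr)
    assume "infinite A"
    then obtain F where "F \<subseteq> A" "finite F" "card F = k + 1" using infinite_arbitrarily_large by blast
    thus False using assms by blast
  qed
  moreover have "card A \<le> k"
  proof (rule ccontr)
    assume "\<not> card A \<le> k"
    then obtain F where "F \<subseteq> A" "card F = k + 1" using obtain_subset_with_card_n[of "k+1" A] by auto
    moreover have "finite F" using fin \<open>F \<subseteq> A\<close> finite_subset by blast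
    ultimately show False using assms by blast
  qed
  ultimately show ?thesis by blast
qed

lemma knn_nonempty:
  assumes lf: "locally_finite_conf P" and F: "finite F" "F \<subseteq> P" "card F \<ge> k + 1"
  shows "{r. r > 0 \<and> card (P \<inter> cball 0 r) \<ge> k + 1} \<noteq> {}"
proof -
  obtain r where "\<forall>x\<in>F. norm x \<le> r" using bounded_pos finite_imp_bounded[OF F(1)] by metis
  hence r: "F \<subseteq> cball 0 r" by (auto simp: mem_cball_0)
  define r' where "r' = max r 1"
  have r'0: "r' > 0" by (simp add: r'_def)
  have "cball 0 r \<subseteq> cball (0::'a) r'" by (auto simp: r'_def mem_cball_0)
  hence "F \<subseteq> P \<inter> cball 0 r'" using r F(2) by blast
  hence "card F \<le> card (P \<inter> cball 0 r')" using lf_cball[OF lf] by (intro card_mono) auto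
  hence "r' \<in> {r. r > 0 \<and> card (P \<inter> cball 0 r) \<ge> k + 1}" using F(3) r'0 by simp
  thus ?thesis by blast
qed


lemma cone_part:
  fixes c :: "'a::euclidean_space"
  assumes lf: "locally_finite_conf P" and k: "k \<ge> 1"
  shows "finite {x\<in>P. x \<noteq> 0 \<and> norm x \<le> knn_radius k (shift_conf P x) \<and> dist (x /\<^sub>R norm x) c < 1/2}
    \<and> card {x\<in>P. x \<noteq> 0 \<and> norm x \<le> knn_radius k (shift_conf P x) \<and> dist (x /\<^sub>R norm x) c < 1/2} \<le> k"
proof (rule finite_card_bound)
  fix F assume FD: "F \<subseteq> {x\<in>P. x \<noteq> 0 \<and> norm x \<le> knn_radius k (shift_conf P x) \<and> dist (x /\<^sub>R norm x) c < 1/2}"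
    and fin: "finite F" and cF: "card F = k + 1"
  have Fne: "F \<noteq> {}" using cF by auto
  have "Max (norm ` F) \<in> norm ` F" using fin Fne by (intro Max_in) auto
  then obtain y where yF: "y \<in> F" and ymax: "norm y = Max (norm ` F)" by auto
  have ymax': "\<And>z. z \<in> F \<Longrightarrow> norm z \<le> norm y" using fin ymax by simp
  define G where "G = F - {y}"
  have finG: "finite G" using fin by (simp add: G_def)
  have cG: "card G = k" using cF yF fin by (simp add: G_def)
  hence Gne: "G \<noteq> {}" using k by auto
  have y: "y \<in> P" "y \<noteq> 0" "norm y \<le> knn_radius k (shift_conf P y)" "dist (y /\<^sub>R norm y) c < 1/2"
    using FD yF by auto
  have lt: "norm (z - y) < norm y" if "z \<in> G" for z
  proof (rule cone_geom[of y z c])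
    show "y \<noteq> 0" "dist (y /\<^sub>R norm y) c < 1/2" by fact+
    show "z \<noteq> 0" "dist (z /\<^sub>R norm z) c < 1/2" "z \<noteq> y" using that FD by (auto simp: G_def)
    show "norm z \<le> norm y" using that ymax' by (auto simp: G_def)
  qed
  define r where "r = Max ((\<lambda>z. norm (z - y)) ` G)"
  have "r \<in> (\<lambda>z. norm (z - y)) ` G" unfolding r_def using finG Gne by (intro Max_in) auto
  hence rlt: "r < norm y" using lt by auto
  obtain z0 where z0: "z0 \<in> G" using Gne by auto
  have "norm (z0 - y) \<le> r" unfolding r_def using finG z0 by (intro Max_ge) auto
  moreover have "z0 \<noteq> y" using z0 by (simp add: G_def)
  moreover have "norm (z0 - y) > 0" using \<open>z0 \<noteq> y\<close> by simp
  ultimately have r0: "r > 0" by linarith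
  have rge: "norm (z - y) \<le> r" if "z \<in> G" for z unfolding r_def using finG that by (intro Max_ge) auto
  have sub: "(\<lambda>z. z - y) ` F \<subseteq> shift_conf P y \<inter> cball 0 r"
  proof
    fix w assume "w \<in> (\<lambda>z. z - y) ` F"
    then obtain z where z: "z \<in> F" "w = z - y" by auto
    have "z \<in> P" using z FD by auto
    hence "w \<in> shift_conf P y" using z by (auto simp: shift_conf_def)
    moreover have "norm w \<le> r"
    proof (cases "z = y")
      case True thus ?thesis using z r0 by simp
    next
      case False thus ?thesis using z rge by (auto simp: G_def)
    qed
    ultimately show "w \<in> shift_conf P y \<inter> cball 0 r" by (simp add: mem_cball_0)
  qed
  have "card ((\<lambda>z. z - y) ` F) = k + 1" using cF by (simp add: card_image inj_on_def)
  hence "knn_radius k (shift_conf P y) \<le> r"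
    using knn_le[OF lf_shift[OF lf] r0 _ sub] fin by simp
  thus False using rlt y(3) by simp
qed

lemma indeg_bound:
  fixes T P :: "'a::euclidean_space set"
  assumes T: "finite T" "sphere (0::'a) 1 \<subseteq> (\<Union>c\<in>T. ball c (1/2))"
    and lf: "locally_finite_conf P" and k: "k \<ge> 1"
  shows "finite {x\<in>P. x \<noteq> 0 \<and> norm x \<le> knn_radius k (shift_conf P x)}
    \<and> card {x\<in>P. x \<noteq> 0 \<and> norm x \<le> knn_radius k (shift_conf P x)} \<le> k * card T"
proof -
  define D where "D c = {x\<in>P. x \<noteq> 0 \<and> norm x \<le> knn_radius k (shift_conf P x) \<and> dist (x /\<^sub>R norm x) c < 1/2}" for c
  have sub: "{x\<in>P. x \<noteq> 0 \<and> norm x \<le> knn_radius k (shift_conf P x)} \<subseteq> (\<Union>c\<in>T. D c)"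
  proof
    fix x assume x: "x \<in> {x\<in>P. x \<noteq> 0 \<and> norm x \<le> knn_radius k (shift_conf P x)}"
    hence "x /\<^sub>R norm x \<in> sphere 0 1" by auto
    then obtain c where "c \<in> T" "x /\<^sub>R norm x \<in> ball c (1/2)" using T(2) by blast
    thus "x \<in> (\<Union>c\<in>T. D c)" using x by (auto simp: D_def dist_commute)
  qed
  have Dc: "finite (D c) \<and> card (D c) \<le> k" for c unfolding D_def by (rule cone_part[OF lf k])
  have finU: "finite (\<Union>c\<in>T. D c)" using T(1) Dc by simp
  have "card (\<Union>c\<in>T. D c) \<le> (\<Sum>c\<in>T. card (D c))" by (rule card_UN_le[OF T(1)])
  also have "\<dots> \<le> (\<Sum>c\<in>T. k)" using Dc by (intro sum_mono) auto
  also have "\<dots> = k * card T" by simp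
  finally have "card (\<Union>c\<in>T. D c) \<le> k * card T" .
  moreover have "finite {x\<in>P. x \<noteq> 0 \<and> norm x \<le> knn_radius k (shift_conf P x)}" using finite_subset[OF sub finU] .
  moreover have "card {x\<in>P. x \<noteq> 0 \<and> norm x \<le> knn_radius k (shift_conf P x)} \<le> card (\<Union>c\<in>T. D c)" using card_mono[OF finU sub] .
  ultimately show ?thesis by linarith
qed


lemma K_bound:
  fixes \<phi> :: "'a::euclidean_space set"
  assumes lf: "locally_finite_conf \<phi>" and n0: "0 \<notin> \<phi>" and inj: "inj_on norm \<phi>" and k: "k \<ge> 1"
  shows "finite {y\<in>\<phi>. norm y \<le> knn_radius k (insert 0 \<phi>)} \<and> card {y\<in>\<phi>. norm y \<le> knn_radius k (insert 0 \<phi>)} \<le> k"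
proof (rule finite_card_bound)
  fix F assume FD: "F \<subseteq> {y\<in>\<phi>. norm y \<le> knn_radius k (insert 0 \<phi>)}"
    and fin: "finite F" and cF: "card F = k + 1"
  have Fne: "F \<noteq> {}" using cF by auto
  have "Max (norm ` F) \<in> norm ` F" using fin Fne by (intro Max_in) auto
  then obtain y where yF: "y \<in> F" and ymax: "norm y = Max (norm ` F)" by auto
  have ymax': "\<And>z. z \<in> F \<Longrightarrow> norm z \<le> norm y" using fin ymax by simp
  define G where "G = F - {y}"
  have finG: "finite G" using fin by (simp add: G_def)
  have cG: "card G = k" using cF yF fin by (simp add: G_def)
  hence Gne: "G \<noteq> {}" using k by auto
  have y: "y \<in> \<phi>" "norm y \<le> knn_radius k (insert 0 \<phi>)" using FD yF by auto
  have lt: "norm z < norm y" if "z \<in> G" for z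
  proof -
    have "z \<in> \<phi>" "z \<noteq> y" "norm z \<le> norm y" using that FD ymax' by (auto simp: G_def)
    moreover have "norm z \<noteq> norm y" using inj \<open>z \<in> \<phi>\<close> \<open>z \<noteq> y\<close> y(1) by (auto dest: inj_onD)
    ultimately show ?thesis by linarith
  qed
  define r where "r = Max (norm ` G)"
  have "r \<in> norm ` G" unfolding r_def using finG Gne by (intro Max_in) auto
  hence rlt: "r < norm y" using lt by auto
  obtain z0 where z0: "z0 \<in> G" using Gne by auto
  have "norm z0 \<le> r" unfolding r_def using finG z0 by (intro Max_ge) auto
  moreover have "z0 \<noteq> 0" using z0 FD n0 by (auto simp: G_def)
  hence "norm z0 > 0" by simp
  ultimately have r0: "r > 0" by linarith
  have rge: "norm z \<le> r" if "z \<in> G" for z unfolding r_def using finG that by (intro Max_ge) auto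
  have sub: "insert 0 G \<subseteq> insert 0 \<phi> \<inter> cball 0 r"
    using rge r0 FD by (auto simp: G_def mem_cball_0)
  have "0 \<notin> G" using FD n0 by (auto simp: G_def)
  hence "card (insert 0 G) = k + 1" using cG finG by simp
  hence "knn_radius k (insert 0 \<phi>) \<le> r"
    using knn_le[OF lf_insert[OF lf] r0 _ sub] finG by simp
  thus False using rlt y(2) by simp
qed

lemma ne_shift:
  assumes lf: "locally_finite_conf \<phi>" and F: "finite F" "F \<subseteq> \<phi>" "card F \<ge> k + 1"
  shows "{r. r > 0 \<and> card (shift_conf \<phi> a \<inter> cball 0 r) \<ge> k + 1} \<noteq> {}"
proof (rule knn_nonempty[OF lf_shift[OF lf]])
  show "finite ((\<lambda>z. z - a) ` F)" using F by simp
  show "(\<lambda>z. z - a) ` F \<subseteq> shift_conf \<phi> a" using F by (auto simp: shift_conf_def)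
  show "k + 1 \<le> card ((\<lambda>z. z - a) ` F)" using F by (simp add: card_image inj_on_def)
qed



lemma incr_imp:
  fixes \<phi> T :: "'a::euclidean_space set"
  assumes T: "finite T" "sphere (0::'a) 1 \<subseteq> (\<Union>c\<in>T. ball c (1/2))"
    and lf: "locally_finite_conf \<phi>" and n0: "0 \<notin> \<phi>" and yphi: "y \<in> \<phi>" and k: "k \<ge> 1"
    and F: "finite F" "F \<subseteq> \<phi>" "card F \<ge> k + 1" and al: "\<alpha> \<ge> 0"
    and gt: "xi_knn k \<alpha> (shift_conf (insert 0 \<phi>) y) > xi_knn k \<alpha> (shift_conf \<phi> y)"
  shows "norm y \<le> knn_radius k (shift_conf (insert 0 \<phi>) y) \<or> norm y \<le> knn_radius k (insert 0 \<phi>)"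
proof (rule ccontr)
  assume nb: "\<not> ?thesis"
  define \<Psi> where "\<Psi> = shift_conf \<phi> y"
  define \<Phi> where "\<Phi> = shift_conf (insert 0 \<phi>) y"
  have PhiPsi: "\<Phi> = insert (-y) \<Psi>" by (simp add: \<Phi>_def \<Psi>_def shift_insert)
  have lfPsi: "locally_finite_conf \<Psi>" using lf by (simp add: \<Psi>_def lf_shift)
  have lfPhi: "locally_finite_conf \<Phi>" using lfPsi by (simp add: PhiPsi lf_insert)
  define S\<Phi> where "S\<Phi> = {x\<in>\<Phi>. norm x \<le> max (knn_radius k \<Phi>) (knn_radius k (shift_conf \<Phi> x))}"
  define S\<Psi> where "S\<Psi> = {x\<in>\<Psi>. norm x \<le> max (knn_radius k \<Psi>) (knn_radius k (shift_conf \<Psi> x))}"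
  have R1: "knn_radius k \<Phi> \<le> knn_radius k \<Psi>"
  proof (rule knn_mono[OF lfPhi])
    show "\<Psi> \<subseteq> \<Phi>" by (auto simp: PhiPsi)
    show "{r. 0 < r \<and> k + 1 \<le> card (\<Psi> \<inter> cball 0 r)} \<noteq> {}"
      using ne_shift[OF lf F, of y] by (simp add: \<Psi>_def)
  qed
  have R2: "knn_radius k (shift_conf \<Phi> x) \<le> knn_radius k (shift_conf \<Psi> x)" for x
  proof (rule knn_mono[OF lf_shift[OF lfPhi]])
    show "shift_conf \<Psi> x \<subseteq> shift_conf \<Phi> x" by (auto simp: PhiPsi shift_conf_def)
    show "{r. 0 < r \<and> k + 1 \<le> card (shift_conf \<Psi> x \<inter> cball 0 r)} \<noteq> {}"
      using ne_shift[OF lf F, of "y + x"] by (simp add: \<Psi>_def shift_shift)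
  qed
  have sub: "S\<Phi> \<subseteq> S\<Psi>"
  proof
    fix x assume x: "x \<in> S\<Phi>"
    have "x \<noteq> -y"
    proof
      assume "x = -y"
      hence "shift_conf \<Phi> x = insert 0 \<phi>" by (simp add: \<Phi>_def shift_shift shift_0)
      thus False using x nb \<open>x = -y\<close> by (auto simp: S\<Phi>_def \<Phi>_def)
    qed
    hence "x \<in> \<Psi>" using x by (auto simp: S\<Phi>_def PhiPsi)
    thus "x \<in> S\<Psi>" using x R1 R2[of x] by (auto simp: S\<Phi>_def S\<Psi>_def)
  qed
  have finPsi: "finite S\<Psi>"
  proof -
    have "S\<Psi> \<subseteq> (\<Psi> \<inter> cball 0 (knn_radius k \<Psi>)) \<union> insert 0 {x\<in>\<Psi>. x \<noteq> 0 \<and> norm x \<le> knn_radius k (shift_conf \<Psi> x)}"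
      by (auto simp: S\<Psi>_def mem_cball_0)
    moreover have "finite (\<Psi> \<inter> cball 0 (knn_radius k \<Psi>))" using lf_cball[OF lfPsi] .
    moreover have "finite {x\<in>\<Psi>. x \<noteq> 0 \<and> norm x \<le> knn_radius k (shift_conf \<Psi> x)}"
      using indeg_bound[OF T lfPsi k] by blast
    ultimately show ?thesis using finite_subset by blast
  qed
  have "(\<Sum>x\<in>S\<Phi>. norm x powr \<alpha>) \<le> (\<Sum>x\<in>S\<Psi>. norm x powr \<alpha>)"
    by (rule sum_mono2[OF finPsi sub]) simp
  hence "xi_knn k \<alpha> \<Phi> \<le> xi_knn k \<alpha> \<Psi>" by (simp add: xi_knn_def S\<Phi>_def S\<Psi>_def)
  thus False using gt by (simp add: \<Phi>_def \<Psi>_def)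
qed



lemma pow_diff_le:
  fixes a b :: real
  assumes "0 \<le> a" "a \<le> b"
  shows "b^d - a^d \<le> real d * b^(d-1) * (b - a)"
proof (induction d)
  case 0 thus ?case by simp
next
  case (Suc d)
  have "b^Suc d - a^Suc d = b * (b^d - a^d) + a^d * (b - a)" by (simp add: algebra_simps)
  also have "\<dots> \<le> b * (real d * b^(d-1) * (b - a)) + b^d * (b - a)"
  proof (rule add_mono)
    show "b * (b^d - a^d) \<le> b * (real d * b^(d-1) * (b - a))"
      using Suc.IH assms by (intro mult_left_mono) auto
    show "a^d * (b - a) \<le> b^d * (b - a)"
      using assms by (intro mult_right_mono power_mono) auto
  qed
  also have "\<dots> = real (Suc d) * b^(Suc d - 1) * (b - a)"
  proof (cases d)
    case 0 thus ?thesis by simp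
  next
    case (Suc e) thus ?thesis by (simp add: algebra_simps)
  qed
  finally show ?case .
qed

lemma shell_measure:
  assumes "0 \<le> a" "a \<le> b"
  shows "measure lborel (ball (0::'a::euclidean_space) b - ball 0 a)
    = measure lborel (ball (0::'a) 1) * (b ^ DIM('a) - a ^ DIM('a))"
proof -
  have "measure lborel (ball (0::'a) b - ball 0 a) = measure lborel (ball (0::'a) b) - measure lborel (ball (0::'a) a)"
    using assms emeasure_lborel_ball_finite[of "0::'a" b]
    by (intro measure_Diff) (auto simp: subset_ball)
  also have "\<dots> = measure lborel (ball (0::'a) 1) * (b ^ DIM('a) - a ^ DIM('a))"
    using content_ball_conv_unit_ball[of b "0::'a"] content_ball_conv_unit_ball[of a "0::'a"] assms
    by (simp add: algebra_simps)
  finally show ?thesis .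
qed

lemma poisson_ge2:
  assumes P: "hom_poisson_pp M X" and B: "B \<in> sets lborel" "bounded B"
  shows "{\<omega>\<in>space M. card (X \<omega> \<inter> B) \<ge> 2} \<in> sets M"
    "measure M {\<omega>\<in>space M. card (X \<omega> \<inter> B) \<ge> 2} \<le> (measure lborel B)^2"
proof -
  interpret prob_space M using P by (simp add: hom_poisson_pp_def)
  have meas: "(\<lambda>\<omega>. card (X \<omega> \<inter> B)) \<in> measurable M (count_space UNIV)"
    and dist: "\<And>n. measure M {\<omega>\<in>space M. card (X \<omega> \<inter> B) = n}
               = exp (- measure lborel B) * measure lborel B ^ n / fact n"
    using P B by (auto simp: hom_poisson_pp_def)
  have ev: "{\<omega>\<in>space M. P' (card (X \<omega> \<inter> B))} \<in> sets M" for P'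
  proof -
    have "{\<omega>\<in>space M. P' (card (X \<omega> \<inter> B))} = (\<lambda>\<omega>. card (X \<omega> \<inter> B)) -` {n. P' n} \<inter> space M" by auto
    also have "\<dots> \<in> sets M" using meas by (intro measurable_sets) auto
    finally show ?thesis .
  qed
  thus "{\<omega>\<in>space M. card (X \<omega> \<inter> B) \<ge> 2} \<in> sets M" .
  define l where "l = measure lborel B"
  have l0: "l \<ge> 0" by (simp add: l_def)
  let ?A0 = "{\<omega>\<in>space M. card (X \<omega> \<inter> B) = 0}"
  let ?A1 = "{\<omega>\<in>space M. card (X \<omega> \<inter> B) = 1}"
  have eq: "{\<omega>\<in>space M. card (X \<omega> \<inter> B) \<ge> 2} = space M - (?A0 \<union> ?A1)" by auto
  have "measure M (?A0 \<union> ?A1) = measure M ?A0 + measure M ?A1"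
    using ev by (intro finite_measure_Union) auto
  also have "\<dots> = exp (-l) * (1 + l)" using dist[of 0] dist[of 1] by (simp add: l_def algebra_simps)
  finally have m01: "measure M (?A0 \<union> ?A1) = exp (-l) * (1 + l)" .
  have "measure M {\<omega>\<in>space M. card (X \<omega> \<inter> B) \<ge> 2} = 1 - exp (-l) * (1 + l)"
    unfolding eq using ev m01 by (subst prob_compl) auto
  also have "\<dots> \<le> l^2"
  proof -
    have "1 - l \<le> exp (-l)" using exp_ge_add_one_self[of "-l"] by simp
    hence "(1 - l) * (1 + l) \<le> exp (-l) * (1 + l)" using l0 by (intro mult_right_mono) auto
    thus ?thesis by (simp add: power2_eq_square algebra_simps)
  qed
  finally show "measure M {\<omega>\<in>space M. card (X \<omega> \<inter> B) \<ge> 2} \<le> (measure lborel B)^2" by (simp add: l_def)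
qed



lemma le_zero_by_arch:
  fixes x K :: real
  assumes "\<And>m::nat. x \<le> K / real (Suc m)"
  shows "x \<le> 0"
proof (rule ccontr)
  assume "\<not> x \<le> 0" hence x0: "x > 0" by simp
  obtain m :: nat where "K / x < real m" using reals_Archimedean2 by blast
  hence "K / x < real (Suc m)" by simp
  hence "K < x * real (Suc m)" using x0 by (simp add: divide_less_eq mult.commute)
  hence "K / real (Suc m) < x" by (simp add: divide_less_eq)
  thus False using assms[of m] by simp
qed

lemma ae_inj:
  fixes X :: "'m \<Rightarrow> 'a::euclidean_space set"
  assumes P: "hom_poisson_pp M X"
  shows "AE \<omega> in M. inj_on norm (X \<omega>)"
proof -
  interpret prob_space M using P by (simp add: hom_poisson_pp_def)
  have lfX: "\<And>\<omega>. \<omega> \<in> space M \<Longrightarrow> locally_finite_conf (X \<omega>)" using P by (simp add: hom_poisson_pp_def)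
  define V where "V = measure lborel (ball (0::'a) 1)"
  define d where "d = DIM('a)"
  define h where "h n m = real n / real (Suc m)" for n m :: nat
  define sh where "sh n m j = ball (0::'a) ((real j + 1) * h n m) - ball 0 (real j * h n m)" for n m j :: nat
  define A where "A n m j = {\<omega>\<in>space M. card (X \<omega> \<inter> sh n m j) \<ge> 2}" for n m j
  define Bad where "Bad n = (\<Inter>m. \<Union>j<Suc m. A n m j)" for n
  have h0: "h n m \<ge> 0" for n m by (simp add: h_def)
  have shB: "sh n m j \<in> sets lborel" "bounded (sh n m j)" for n m j
    unfolding sh_def by (auto intro!: sets.Diff borel_open intro: bounded_subset[OF bounded_ball])
  have A: "A n m j \<in> sets M" "measure M (A n m j) \<le> (measure lborel (sh n m j))^2" for n m j
    using poisson_ge2[OF P shB[of n m j]] by (simp_all add: A_def)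
  have shm: "measure lborel (sh n m j) = V * (((real j + 1) * h n m)^d - (real j * h n m)^d)" for n m j
    unfolding sh_def V_def d_def using h0[of n m] by (intro shell_measure) (auto intro: mult_right_mono)
  define c where "c n = V * real d * real n ^ (d - 1) * real n" for n :: nat
  have V0: "V \<ge> 0" by (simp add: V_def)
  have lam_le: "measure lborel (sh n m j) \<le> c n / real (Suc m)" if "j < Suc m" for n m j
  proof -
    have a: "(real j + 1) * h n m \<le> real n"
    proof -
      have "real j \<le> real m" using that by simp
      hence "real j * real n \<le> real m * real n" by (intro mult_right_mono) auto
      thus ?thesis by (simp add: h_def field_simps)
    qed
    have "((real j + 1) * h n m)^d - (real j * h n m)^d \<le> real d * ((real j + 1) * h n m)^(d-1) * ((real j + 1) * h n m - real j * h n m)"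
      using h0[of n m] by (intro pow_diff_le) (auto intro: mult_right_mono)
    also have "\<dots> \<le> real d * real n ^ (d-1) * h n m"
      using a h0[of n m] by (auto simp: algebra_simps intro!: mult_left_mono power_mono)
    finally have "measure lborel (sh n m j) \<le> V * (real d * real n ^ (d-1) * h n m)"
      unfolding shm using V0 by (intro mult_left_mono) auto
    thus ?thesis by (simp add: c_def h_def)
  qed
  have lam_sum: "(\<Sum>j<Suc m. measure lborel (sh n m j)) = V * real n ^ d" for n m
  proof -
    define f where "f j = (real j * h n m)^d" for j :: nat
    have "(\<Sum>j<Suc m. measure lborel (sh n m j)) = (\<Sum>j<Suc m. V * (f (Suc j) - f j))"
      by (intro sum.cong) (simp_all add: shm f_def add.commute)
    also have "\<dots> = V * (\<Sum>j<Suc m. f (Suc j) - f j)" by (rule sum_distrib_left[symmetric])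
    also have "\<dots> = V * (f (Suc m) - f 0)" by (simp only: sum_lessThan_telescope)
    also have "\<dots> = V * real n ^ d" by (simp add: f_def h_def d_def)
    finally show ?thesis .
  qed
  have Bad_sets: "Bad n \<in> sets M" for n
    unfolding Bad_def using A by (intro sets.countable_INT' sets.finite_UN) auto
  have Bad_le: "measure M (Bad n) \<le> V * real n ^ d * c n / real (Suc m)" for n m
  proof -
    have "measure M (Bad n) \<le> measure M (\<Union>j<Suc m. A n m j)"
      using A by (intro finite_measure_mono) (auto simp: Bad_def)
    also have "\<dots> \<le> (\<Sum>j<Suc m. measure M (A n m j))" using A by (intro measure_UNION_le) auto
    also have "\<dots> \<le> (\<Sum>j<Suc m. measure lborel (sh n m j) * (c n / real (Suc m)))"
    proof (intro sum_mono)
      fix j assume "j \<in> {..<Suc m}"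
      hence "measure lborel (sh n m j) \<le> c n / real (Suc m)" using lam_le by simp
      hence "(measure lborel (sh n m j))^2 \<le> measure lborel (sh n m j) * (c n / real (Suc m))"
        unfolding power2_eq_square by (intro mult_left_mono) auto
      thus "measure M (A n m j) \<le> measure lborel (sh n m j) * (c n / real (Suc m))" using A(2)[of n m j] by linarith
    qed
    also have "\<dots> = (\<Sum>j<Suc m. measure lborel (sh n m j)) * (c n / real (Suc m))"
      by (rule sum_distrib_right[symmetric])
    also have "\<dots> = V * real n ^ d * c n / real (Suc m)" by (simp only: lam_sum) simp
    finally show ?thesis .
  qed
  have Bad_null: "Bad n \<in> null_sets M" for n
  proof -
    have "measure M (Bad n) \<le> 0" using Bad_le by (intro le_zero_by_arch) blast
    hence "measure M (Bad n) = 0" using measure_nonneg[of M "Bad n"] by linarith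
    thus ?thesis using Bad_sets by (simp add: emeasure_eq_measure null_setsI)
  qed
  have sub: "{\<omega>\<in>space M. \<not> inj_on norm (X \<omega>)} \<subseteq> (\<Union>n. Bad n)"
  proof
    fix \<omega> assume "\<omega> \<in> {\<omega>\<in>space M. \<not> inj_on norm (X \<omega>)}"
    then obtain x x' where om: "\<omega> \<in> space M" and xx: "x \<in> X \<omega>" "x' \<in> X \<omega>" "x \<noteq> x'" "norm x = norm x'"
      by (auto simp: inj_on_def)
    define t where "t = norm x"
    define n where "n = nat (ceiling t) + 1"
    have tn: "t < real n" unfolding n_def by linarith
    have t0: "t \<ge> 0" by (simp add: t_def)
    have "\<omega> \<in> Bad n" unfolding Bad_def
    proof (rule InterI)
      fix S assume "S \<in> range (\<lambda>m. \<Union>j<Suc m. A n m j)"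
      then obtain m where S: "S = (\<Union>j<Suc m. A n m j)" by auto
      define hh where "hh = h n m"
      have hh0: "hh > 0" using tn t0 by (simp add: hh_def h_def)
      define j where "j = nat (floor (t / hh))"
      have q0: "t / hh \<ge> 0" using t0 hh0 by simp
      have rj: "real j = of_int (floor (t / hh))" unfolding j_def using q0 by simp
      have fq: "real j \<le> t / hh" "t / hh < real j + 1" unfolding rj by linarith+
      have jl: "real j * hh \<le> t" using fq(1) hh0 by (simp add: le_divide_eq)
      have ju: "t < (real j + 1) * hh" using fq(2) hh0 by (simp add: divide_less_eq)
      have "t * real (Suc m) < real n * real (Suc m)" using tn by (intro mult_strict_right_mono) auto
      hence "t / hh < real (Suc m)" using tn t0 by (simp add: hh_def h_def field_simps)
      hence jm: "j < Suc m" using fq(1) by linarith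
      have inS: "x \<in> sh n m j" "x' \<in> sh n m j" using jl ju xx(4) by (auto simp: sh_def t_def hh_def)
      have fin: "finite (X \<omega> \<inter> sh n m j)" using lfX[OF om] shB(2) by (simp add: locally_finite_conf_def)
      have "{x, x'} \<subseteq> X \<omega> \<inter> sh n m j" using inS xx by auto
      hence "card {x, x'} \<le> card (X \<omega> \<inter> sh n m j)" using fin by (intro card_mono)
      hence "\<omega> \<in> A n m j" using xx(3) om by (simp add: A_def)
      thus "\<omega> \<in> S" using jm S by blast
    qed
    thus "\<omega> \<in> (\<Union>n. Bad n)" by blast
  qed
  show ?thesis by (rule AE_I'[OF _ sub]) (use Bad_null in blast)
qed


lemma pointwise:
  fixes \<phi> T :: "'a::euclidean_space set"
  assumes T: "finite T" "sphere (0::'a) 1 \<subseteq> (\<Union>c\<in>T. ball c (1/2))"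
    and lf: "locally_finite_conf \<phi>" and inj: "inj_on norm \<phi>" and k: "k \<ge> 1" and al: "\<alpha> \<ge> 0"
  shows "finite {y \<in> \<phi>. xi_knn k \<alpha> (shift_conf (insert 0 \<phi>) y) > xi_knn k \<alpha> (shift_conf \<phi> y)} \<and>
       card {y \<in> \<phi>. xi_knn k \<alpha> (shift_conf (insert 0 \<phi>) y) > xi_knn k \<alpha> (shift_conf \<phi> y)} \<le> k * card T + k"
    (is "finite ?S \<and> card ?S \<le> _")
proof (cases "0 \<in> \<phi>")
  case True
  hence e: "?S = {}" by (simp add: insert_absorb)
  show ?thesis unfolding e by simp
next
  case n0: False
  show ?thesis
  proof (cases "finite \<phi> \<and> card \<phi> \<le> k")
    case True
    have "?S \<subseteq> \<phi>" by blast
    have fS: "finite ?S" using True by simp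
    have "card ?S \<le> card \<phi>" using True by (intro card_mono) auto
    thus ?thesis using True fS by linarith
  next
    case False
    obtain F where F: "F \<subseteq> \<phi>" "finite F" "card F = k + 1"
    proof (cases "finite \<phi>")
      case True
      hence "k + 1 \<le> card \<phi>" using False by simp
      then obtain F where F1: "F \<subseteq> \<phi>" "card F = k + 1" using obtain_subset_with_card_n by blast
      moreover have "finite F" using F1(1) True by (rule finite_subset)
      ultimately show ?thesis using that by blast
    next
      case False
      then obtain F where F1: "finite F" "card F = k + 1" "F \<subseteq> \<phi>" using infinite_arbitrarily_large by blast
      thus ?thesis using that by blast
    qed
    define D where "D = {x\<in>insert 0 \<phi>. x \<noteq> 0 \<and> norm x \<le> knn_radius k (shift_conf (insert 0 \<phi>) x)}"
    define K where "K = {y\<in>\<phi>. norm y \<le> knn_radius k (insert 0 \<phi>)}"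
    have D: "finite D \<and> card D \<le> k * card T" unfolding D_def by (rule indeg_bound[OF T lf_insert[OF lf] k])
    have K: "finite K \<and> card K \<le> k" unfolding K_def by (rule K_bound[OF lf n0 inj k])
    have sub: "?S \<subseteq> D \<union> K"
    proof
      fix y assume "y \<in> ?S"
      hence y: "y \<in> \<phi>" "xi_knn k \<alpha> (shift_conf (insert 0 \<phi>) y) > xi_knn k \<alpha> (shift_conf \<phi> y)" by auto
      have "y \<noteq> 0" using y n0 by auto
      have "norm y \<le> knn_radius k (shift_conf (insert 0 \<phi>) y) \<or> norm y \<le> knn_radius k (insert 0 \<phi>)"
        using incr_imp[OF T lf n0 y(1) k F(2) F(1) _ al y(2)] F(3) by simp
      thus "y \<in> D \<union> K"
      proof
        assume "norm y \<le> knn_radius k (shift_conf (insert 0 \<phi>) y)"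
        hence "y \<in> D" using \<open>y \<noteq> 0\<close> y(1) by (simp add: D_def)
        thus ?thesis by simp
      next
        assume "norm y \<le> knn_radius k (insert 0 \<phi>)"
        hence "y \<in> K" using y(1) by (simp add: K_def)
        thus ?thesis by simp
      qed
    qed
    have "finite (D \<union> K)" using D K by blast
    have fU: "finite (D \<union> K)" using D K by blast
    have "finite ?S" using finite_subset[OF sub fU] .
    moreover have "card ?S \<le> card (D \<union> K)" using card_mono[OF fU sub] .
    moreover have "card (D \<union> K) \<le> card D + card K" by (rule card_Un_le)
    ultimately show ?thesis using D K by auto
  qed
qed


theorem lemma2p1:
  fixes M :: "'m measure" and X :: "'m \<Rightarrow> 'a::euclidean_space set"
    and k :: nat and \<alpha> :: real
  assumes "k \<ge> 1" and "\<alpha> \<ge> 0" and "hom_poisson_pp M X"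
  shows "\<exists>k'::nat. k' \<ge> 1 \<and>
    (AE \<omega> in M.
       finite {y \<in> X \<omega>. xi_knn k \<alpha> (shift_conf (insert 0 (X \<omega>)) y) > xi_knn k \<alpha> (shift_conf (X \<omega>) y)} \<and>
       card {y \<in> X \<omega>. xi_knn k \<alpha> (shift_conf (insert 0 (X \<omega>)) y) > xi_knn k \<alpha> (shift_conf (X \<omega>) y)} \<le> k')"
proof -
  have "compact (sphere (0::'a) 1)" by simp
  then obtain T where T: "T \<subseteq> sphere (0::'a) 1" "finite T" "sphere (0::'a) 1 \<subseteq> (\<Union>c\<in>T. ball c (1/2))"
  proof -
    have cover: "sphere (0::'a) 1 \<subseteq> (\<Union>c\<in>sphere 0 1. ball c (1/2))"
    proof
      fix x :: 'a assume "x \<in> sphere 0 1"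
      thus "x \<in> (\<Union>c\<in>sphere 0 1. ball c (1/2))" by (intro UN_I[of x]) auto
    qed
    have opn: "\<And>c. c \<in> sphere (0::'a) 1 \<Longrightarrow> open (ball c (1/2))" by simp
    show ?thesis using compactE_image[OF \<open>compact (sphere (0::'a) 1)\<close> opn cover] that by blast
  qed
  have lfX: "\<And>\<omega>. \<omega> \<in> space M \<Longrightarrow> locally_finite_conf (X \<omega>)" using assms(3) by (simp add: hom_poisson_pp_def)
  have "AE \<omega> in M.
       finite {y \<in> X \<omega>. xi_knn k \<alpha> (shift_conf (insert 0 (X \<omega>)) y) > xi_knn k \<alpha> (shift_conf (X \<omega>) y)} \<and>
       card {y \<in> X \<omega>. xi_knn k \<alpha> (shift_conf (insert 0 (X \<omega>)) y) > xi_knn k \<alpha> (shift_conf (X \<omega>) y)} \<le> k * card T + k"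
    using ae_inj[OF assms(3)] AE_space
  proof eventually_elim
    case (elim \<omega>)
    show ?case using pointwise[OF T(2,3) lfX[OF elim(2)] elim(1) assms(1,2)] .
  qed
  moreover have "k * card T + k \<ge> 1" using assms(1) by simp
  ultimately show ?thesis by blast
qed

end
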